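(* Let $I\unlhd K[x_1,\dots,x_n]$ be a homogeneous ideal and let $w\in\mathbb R^n$. Then the map $\{-1\}\times\mathbb R^n\to\mathbb R^n$, $(-1,v)\mapsto v$, maps $C_{(-1,w)}(\pi^{-1}I)\cap(\{-1\}\times\mathbb R^n)$ into the Gröbner polytope $C_{\nu,w}(I)$.
   Context: Let $K$ be a complete field with a non-trivial discrete valuation $\nu$ (normalized with $\nu(p)=1$) and a uniformizing parameter $p$. Let $\mathcal O_K$ be its ring of integers and $\mathfrak K$ its residue field. Let $R\subseteq\mathcal O_K$ be a dense noetherian subring with $p\in R$. The map $\pi:R[[t]][x]\to\mathcal O_K[x]\subseteq K[x]$ sends $t\mapsto p$, and $\pi^{-1}I$ denotes the preimage. For $f=\sum_\alpha c_\alpha x^\alpha\in K[x]$, $\operatorname{in}_{\nu,w}(f)=\sum\overline{c_\alpha p^{-\nu(c_\alpha)}}x^\alpha\in\mathfrak K[x]$, summed over the $\alpha$ with $c_\alpha\ne0$ and $w\cdot\alpha-\nu(c_\alpha)$ maximal. $\operatorname{in}_{\nu,w}(I)$ is the ideal generated by these initial forms. For a homogeneous $I$, the Gröbner polytope is $C_{\nu,w}(I)=\overline{\{v\in\mathbb R^n:\operatorname{in}_{\nu,v}(I)=\operatorname{in}_{\nu,w}(I)\}}$ (Euclidean closure). For $f=\sum c_{\alpha,\beta}t^\beta x^\alpha\in R[[t]][x]$ and $u\in\mathbb R_{<0}\times\mathbb R^n$, $\operatorname{in}_u(f)$ is the sum of the terms with $u\cdot(\beta,\alpha)$ maximal. $\operatorname{in}_u(J)\unlhd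 R[t,x]$ is generated by these initial forms. For an $x$-homogeneous ideal $J\unlhd R[[t]][x]$ (generated by elements that are homogeneous as polynomials in $x$ with coefficients in $R[[t]]$), the Gröbner cone is $C_u(J)=\overline{\{v\in\mathbb R_{<0}\times\mathbb R^n:\operatorname{in}_v(J)=\operatorname{in}_u(J)\}}$. *)

theory Defs
  imports "HOL-Analysis.Analysis" "HOL-Library.Poly_Mapping"
    "HOL-Computational_Algebra.Formal_Power_Series"
begin

text \<open>The discrete valuation is a map
  nu :: 'k => int, only meaningful on nonzero elements (nu 0 = infinity is handled by
  explicit case distinctions). Variables x_1..x_n are indexed by a finite type 'n;
  exponent vectors are 'n =>0 nat; polynomials in K[x] have type ('n =>0 nat) =>0 'k;
  elements of R[[t]][x] have type ('n =>0 nat) =>0 'k fps (with coefficients in R).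
  The residue field is an abstract field 'f together with the residue map
  res : O_K -> 'f (a surjective ring homomorphism with kernel the maximal ideal).\<close>

definition discrete_valuation :: "('k::field \<Rightarrow> int) \<Rightarrow> 'k \<Rightarrow> bool" where
  "discrete_valuation \<nu> p \<longleftrightarrow>
     p \<noteq> 0 \<and> \<nu> p = 1 \<and>
     (\<forall>a b. a \<noteq> 0 \<longrightarrow> b \<noteq> 0 \<longrightarrow> \<nu> (a * b) = \<nu> a + \<nu> b) \<and>
     (\<forall>a b. a \<noteq> 0 \<longrightarrow> b \<noteq> 0 \<longrightarrow> a + b \<noteq> 0 \<longrightarrow> \<nu> (a + b) \<ge> min (\<nu> a) (\<nu> b))"

definition val_lim :: "('k::field \<Rightarrow> int) \<Rightarrow> (nat \<Rightarrow> 'k) \<Rightarrow> 'k \<Rightarrow> bool" where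
  "val_lim \<nu> s L \<longleftrightarrow> (\<forall>M::int. \<exists>N. \<forall>m\<ge>N. s m = L \<or> \<nu> (s m - L) \<ge> M)"

definition val_cauchy :: "('k::field \<Rightarrow> int) \<Rightarrow> (nat \<Rightarrow> 'k) \<Rightarrow> bool" where
  "val_cauchy \<nu> s \<longleftrightarrow> (\<forall>M::int. \<exists>N. \<forall>m\<ge>N. \<forall>k\<ge>N. s m = s k \<or> \<nu> (s m - s k) \<ge> M)"

definition val_complete :: "('k::field \<Rightarrow> int) \<Rightarrow> bool" where
  "val_complete \<nu> \<longleftrightarrow> (\<forall>s. val_cauchy \<nu> s \<longrightarrow> (\<exists>L. val_lim \<nu> s L))"

definition val_ring :: "('k::field \<Rightarrow> int) \<Rightarrow> 'k set" where
  "val_ring \<nu> = {a. a = 0 \<or> \<nu> a \<ge> 0}"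

definition residue_map :: "('k::field \<Rightarrow> int) \<Rightarrow> ('k \<Rightarrow> 'f::field) \<Rightarrow> bool" where
  "residue_map \<nu> res \<longleftrightarrow>
     (\<forall>a\<in>val_ring \<nu>. \<forall>b\<in>val_ring \<nu>. res (a + b) = res a + res b \<and> res (a * b) = res a * res b) \<and>
     res 1 = 1 \<and>
     (\<forall>y. \<exists>a\<in>val_ring \<nu>. res a = y) \<and>
     (\<forall>a\<in>val_ring \<nu>. res a = 0 \<longleftrightarrow> (a = 0 \<or> \<nu> a \<ge> 1))"

definition gen_ideal :: "'a::comm_ring_1 set \<Rightarrow> 'a set \<Rightarrow> 'a set" where
  "gen_ideal S G = {(\<Sum>i<(m::nat). h i * g i) | m h g. \<forall>i<m. h i \<in> S \<and> g i \<in> G}"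

definition is_subring :: "'a::comm_ring_1 set \<Rightarrow> bool" where
  "is_subring R \<longleftrightarrow> 0 \<in> R \<and> 1 \<in> R \<and> (\<forall>a\<in>R. \<forall>b\<in>R. a + b \<in> R \<and> a * b \<in> R \<and> - a \<in> R)"

definition ideal_in :: "'a::comm_ring_1 set \<Rightarrow> 'a set \<Rightarrow> bool" where
  "ideal_in R J \<longleftrightarrow> J \<subseteq> R \<and> 0 \<in> J \<and> (\<forall>a\<in>J. \<forall>b\<in>J. a + b \<in> J) \<and> (\<forall>r\<in>R. \<forall>a\<in>J. r * a \<in> J)"

definition noetherian_subring :: "'a::comm_ring_1 set \<Rightarrow> bool" where
  "noetherian_subring R \<longleftrightarrow> is_subring R \<and>
     (\<forall>J. ideal_in R J \<longrightarrow> (\<exists>F. finite F \<and> F \<subseteq> J \<and> J = gen_ideal R F))"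

definition dense_in_val_ring :: "('k::field \<Rightarrow> int) \<Rightarrow> 'k set \<Rightarrow> bool" where
  "dense_in_val_ring \<nu> R \<longleftrightarrow>
     (\<forall>a\<in>val_ring \<nu>. \<forall>M::int. \<exists>r\<in>R. a = r \<or> \<nu> (a - r) \<ge> M)"

definition wdot :: "real^'n::finite \<Rightarrow> ('n \<Rightarrow>\<^sub>0 nat) \<Rightarrow> real" where
  "wdot w \<alpha> = (\<Sum>i\<in>UNIV. w $ i * real (Poly_Mapping.lookup \<alpha> i))"

definition total_deg :: "('n::finite \<Rightarrow>\<^sub>0 nat) \<Rightarrow> nat" where
  "total_deg \<alpha> = (\<Sum>i\<in>UNIV. Poly_Mapping.lookup \<alpha> i)"

definition homogeneous_poly :: "(('n::finite \<Rightarrow>\<^sub>0 nat) \<Rightarrow>\<^sub>0 'k::comm_ring_1) \<Rightarrow> bool" where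
  "homogeneous_poly f \<longleftrightarrow> (\<exists>d. \<forall>\<alpha>\<in>Poly_Mapping.keys f. total_deg \<alpha> = d)"

definition homogeneous_ideal :: "(('n::finite \<Rightarrow>\<^sub>0 nat) \<Rightarrow>\<^sub>0 'k::field) set \<Rightarrow> bool" where
  "homogeneous_ideal I \<longleftrightarrow> (\<exists>G. (\<forall>g\<in>G. homogeneous_poly g) \<and> I = gen_ideal UNIV G)"

definition in_nu :: "('k::field \<Rightarrow> int) \<Rightarrow> ('k \<Rightarrow> 'f::field) \<Rightarrow> 'k \<Rightarrow> real^'n::finite
     \<Rightarrow> (('n \<Rightarrow>\<^sub>0 nat) \<Rightarrow>\<^sub>0 'k) \<Rightarrow> (('n \<Rightarrow>\<^sub>0 nat) \<Rightarrow>\<^sub>0 'f)" where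
  "in_nu \<nu> res p w f =
     (let wt = (\<lambda>\<alpha>. wdot w \<alpha> - real_of_int (\<nu> (Poly_Mapping.lookup f \<alpha>)));
          M = Max (wt ` Poly_Mapping.keys f)
      in \<Sum>\<alpha>\<in>{\<alpha>\<in>Poly_Mapping.keys f. wt \<alpha> = M}.
           Poly_Mapping.single \<alpha> (res (Poly_Mapping.lookup f \<alpha> * p powi (- \<nu> (Poly_Mapping.lookup f \<alpha>)))))"

definition in_nu_ideal :: "('k::field \<Rightarrow> int) \<Rightarrow> ('k \<Rightarrow> 'f::field) \<Rightarrow> 'k \<Rightarrow> real^'n::finite
     \<Rightarrow> (('n \<Rightarrow>\<^sub>0 nat) \<Rightarrow>\<^sub>0 'k) set \<Rightarrow> (('n \<Rightarrow>\<^sub>0 nat) \<Rightarrow>\<^sub>0 'f) set" where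
  "in_nu_ideal \<nu> res p w I = gen_ideal UNIV (in_nu \<nu> res p w ` I)"

definition groebner_polytope :: "('k::field \<Rightarrow> int) \<Rightarrow> ('k \<Rightarrow> 'f::field) \<Rightarrow> 'k
     \<Rightarrow> (('n::finite \<Rightarrow>\<^sub>0 nat) \<Rightarrow>\<^sub>0 'k) set \<Rightarrow> real^'n \<Rightarrow> (real^'n) set" where
  "groebner_polytope \<nu> res p I w =
     closure {v. in_nu_ideal \<nu> res p v I = in_nu_ideal \<nu> res p w I}"

definition RtX :: "'k::field set \<Rightarrow> (('n \<Rightarrow>\<^sub>0 nat) \<Rightarrow>\<^sub>0 'k fps) set" where
  "RtX R = {f. \<forall>\<alpha> \<beta>. fps_nth (Poly_Mapping.lookup f \<alpha>) \<beta> \<in> R}"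

definition RtxPoly :: "'k::field set \<Rightarrow> (('n \<Rightarrow>\<^sub>0 nat) \<Rightarrow>\<^sub>0 'k fps) set" where
  "RtxPoly R = {f \<in> RtX R. \<forall>\<alpha>. finite {\<beta>. fps_nth (Poly_Mapping.lookup f \<alpha>) \<beta> \<noteq> 0}}"

definition subst_p :: "('k::field \<Rightarrow> int) \<Rightarrow> 'k \<Rightarrow> 'k fps \<Rightarrow> 'k" where
  "subst_p \<nu> p c = (THE L. val_lim \<nu> (\<lambda>N. \<Sum>\<beta><N. fps_nth c \<beta> * p ^ \<beta>) L)"

definition pi_map :: "('k::field \<Rightarrow> int) \<Rightarrow> 'k \<Rightarrow> (('n \<Rightarrow>\<^sub>0 nat) \<Rightarrow>\<^sub>0 'k fps)
     \<Rightarrow> (('n \<Rightarrow>\<^sub>0 nat) \<Rightarrow>\<^sub>0 'k)" where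
  "pi_map \<nu> p f = Poly_Mapping.map (subst_p \<nu> p) f"

definition pi_preimage :: "('k::field \<Rightarrow> int) \<Rightarrow> 'k \<Rightarrow> 'k set \<Rightarrow> (('n \<Rightarrow>\<^sub>0 nat) \<Rightarrow>\<^sub>0 'k) set
     \<Rightarrow> (('n \<Rightarrow>\<^sub>0 nat) \<Rightarrow>\<^sub>0 'k fps) set" where
  "pi_preimage \<nu> p R I = {f \<in> RtX R. pi_map \<nu> p f \<in> I}"

definition tw :: "real \<times> (real^'n::finite) \<Rightarrow> ('n \<Rightarrow>\<^sub>0 nat) \<Rightarrow> nat \<Rightarrow> real" where
  "tw u \<alpha> \<beta> = fst u * real \<beta> + wdot (snd u) \<alpha>"

definition in_u :: "real \<times> (real^'n::finite) \<Rightarrow> (('n \<Rightarrow>\<^sub>0 nat) \<Rightarrow>\<^sub>0 'k::field fps)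
     \<Rightarrow> (('n \<Rightarrow>\<^sub>0 nat) \<Rightarrow>\<^sub>0 'k fps)" where
  "in_u u f =
     (let M = Sup {tw u \<alpha> \<beta> | \<alpha> \<beta>. fps_nth (Poly_Mapping.lookup f \<alpha>) \<beta> \<noteq> 0}
      in \<Sum>\<alpha>\<in>Poly_Mapping.keys f. Poly_Mapping.single \<alpha>
            (Abs_fps (\<lambda>\<beta>. if tw u \<alpha> \<beta> = M then fps_nth (Poly_Mapping.lookup f \<alpha>) \<beta> else 0)))"

definition in_u_ideal :: "'k::field set \<Rightarrow> real \<times> (real^'n::finite)
     \<Rightarrow> (('n \<Rightarrow>\<^sub>0 nat) \<Rightarrow>\<^sub>0 'k fps) set \<Rightarrow> (('n \<Rightarrow>\<^sub>0 nat) \<Rightarrow>\<^sub>0 'k fps) set" where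
  "in_u_ideal R u J = gen_ideal (RtxPoly R) (in_u u ` J)"

definition groebner_cone :: "'k::field set \<Rightarrow> real \<times> (real^'n::finite)
     \<Rightarrow> (('n \<Rightarrow>\<^sub>0 nat) \<Rightarrow>\<^sub>0 'k fps) set \<Rightarrow> (real \<times> (real^'n)) set" where
  "groebner_cone R u J = closure {v. fst v < 0 \<and> in_u_ideal R v J = in_u_ideal R u J}"

end

theory Submission
  imports Defs
begin


locale vsetting =
  fixes \<nu> :: "'k::field \<Rightarrow> int" and p :: 'k and res :: "'k \<Rightarrow> 'f::field" and R :: "'k set"
  assumes dv: "discrete_valuation \<nu> p"
    and comp: "val_complete \<nu>"
    and resm: "residue_map \<nu> res"
    and subR: "is_subring R"
    and RO: "R \<subseteq> val_ring \<nu>"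
    and dense: "dense_in_val_ring \<nu> R"
    and pR: "p \<in> R"
begin

definition V :: "int \<Rightarrow> 'k set" where "V k = {a. a = 0 \<or> \<nu> a \<ge> k}"

lemma p0: "p \<noteq> 0" and nup: "\<nu> p = 1"
  and numult: "a \<noteq> 0 \<Longrightarrow> b \<noteq> 0 \<Longrightarrow> \<nu> (a * b) = \<nu> a + \<nu> b"
  and nuadd: "a \<noteq> 0 \<Longrightarrow> b \<noteq> 0 \<Longrightarrow> a + b \<noteq> 0 \<Longrightarrow> \<nu> (a + b) \<ge> min (\<nu> a) (\<nu> b)"
  using dv unfolding discrete_valuation_def by auto

lemma nu1: "\<nu> 1 = 0"
  using numult[of 1 1] by simp

lemma num1: "\<nu> (-1) = 0"
  using numult[of "-1" "-1"] nu1 by simp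

lemma nuneg: "\<nu> (- a) = \<nu> a"
proof (cases "a = 0")
  case False then show ?thesis using numult[of "-1" a] num1 by simp
qed simp

lemma nuinv: "a \<noteq> 0 \<Longrightarrow> \<nu> (inverse a) = - \<nu> a"
  using numult[of a "inverse a"] nu1 by simp

lemma nupow: "\<nu> (p ^ n) = int n"
  by (induction n) (simp_all add: nu1 numult p0 nup)

lemma nupowi: "\<nu> (p powi k) = k"
proof (cases "k \<ge> 0")
  case False
  have "p powi k = inverse (p ^ nat (- k))" using False by (simp add: power_int_def power_inverse)
  then show ?thesis using False by (simp add: nuinv p0 nupow)
qed (simp add: power_int_def nupow)

lemma V_add: "a \<in> V k \<Longrightarrow> b \<in> V k \<Longrightarrow> a + b \<in> V k"
  unfolding V_def using nuadd[of a b] by fastforce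

lemma V_neg: "a \<in> V k \<Longrightarrow> - a \<in> V k"
  unfolding V_def by (auto simp: nuneg)

lemma V_diff: "a \<in> V k \<Longrightarrow> b \<in> V k \<Longrightarrow> a - b \<in> V k"
  using V_add[OF _ V_neg] by (metis diff_conv_add_uminus)

lemma V_mult: "a \<in> V k \<Longrightarrow> b \<in> V j \<Longrightarrow> a * b \<in> V (k + j)"
  unfolding V_def by (cases "a = 0"; cases "b = 0") (auto simp: numult)

lemma V_0 [simp]: "0 \<in> V k" unfolding V_def by simp

lemma V_mono: "a \<in> V k \<Longrightarrow> j \<le> k \<Longrightarrow> a \<in> V j" unfolding V_def by auto

lemma V_sum: "(\<And>i. i \<in> F \<Longrightarrow> f i \<in> V k) \<Longrightarrow> sum f F \<in> V k"
  by (induction F rule: infinite_finite_induct) (auto intro: V_add)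

lemma V_pow: "p ^ n \<in> V (int n)" unfolding V_def by (simp add: nupow)

lemma V_powi: "p powi k \<in> V k" unfolding V_def by (simp add: nupowi)

lemma val_ring_V: "val_ring \<nu> = V 0" unfolding val_ring_def V_def by auto

lemma R_V: "r \<in> R \<Longrightarrow> r \<in> V 0" using RO val_ring_V by auto

lemma R_add: "a \<in> R \<Longrightarrow> b \<in> R \<Longrightarrow> a + b \<in> R"
  and R_mult: "a \<in> R \<Longrightarrow> b \<in> R \<Longrightarrow> a * b \<in> R"
  and R_0: "0 \<in> R" and R_1: "1 \<in> R"
  using subR unfolding is_subring_def by auto

lemma R_sum: "(\<And>i. i \<in> F \<Longrightarrow> f i \<in> R) \<Longrightarrow> sum f F \<in> R"
  by (induction F rule: infinite_finite_induct) (auto intro: R_add R_0)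

lemma R_pow: "a \<in> R \<Longrightarrow> a ^ n \<in> R"
  by (induction n) (auto intro: R_mult R_1)

lemma res_add: "a \<in> V 0 \<Longrightarrow> b \<in> V 0 \<Longrightarrow> res (a + b) = res a + res b"
  and res_mult: "a \<in> V 0 \<Longrightarrow> b \<in> V 0 \<Longrightarrow> res (a * b) = res a * res b"
  and res_zero: "a \<in> V 0 \<Longrightarrow> res a = 0 \<longleftrightarrow> a \<in> V 1"
  using resm unfolding residue_map_def val_ring_V[symmetric] by (auto simp: V_def val_ring_def)

lemma res_0 [simp]: "res 0 = 0" using res_zero[of 0] by simp

lemma res_eq: "a \<in> V 0 \<Longrightarrow> a - b \<in> V 1 \<Longrightarrow> res a = res b"
proof -
  assume a: "a \<in> V 0" and d: "a - b \<in> V 1"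
  have d0: "a - b \<in> V 0" using d V_mono by auto
  have b: "b \<in> V 0" using V_diff[OF a d0] by simp
  have "res a = res (b + (a - b))" by simp
  also have "\<dots> = res b + res (a - b)" using res_add[OF b d0] .
  finally show ?thesis using res_zero[OF d0] d by simp
qed

lemma V_nu: "a \<noteq> 0 \<Longrightarrow> a \<in> V (\<nu> a)" unfolding V_def by simp

lemma strict: "a \<noteq> 0 \<Longrightarrow> e \<in> V (\<nu> a + 1) \<Longrightarrow> a + e \<noteq> 0 \<and> \<nu> (a + e) = \<nu> a"
proof -
  assume a: "a \<noteq> 0" and e: "e \<in> V (\<nu> a + 1)"
  have ne: "a + e \<noteq> 0"
  proof
    assume "a + e = 0" then have "e = - a" by (metis minus_unique)
    with e a show False by (auto simp: V_def nuneg)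
  qed
  have "a + e \<in> V (\<nu> a)" using V_add[OF V_nu[OF a] V_mono[OF e]] by simp
  hence ge: "\<nu> (a + e) \<ge> \<nu> a" using ne by (simp add: V_def)
  have "a = (a + e) + (- e)" by simp
  have "a \<in> V (min (\<nu> (a+e)) (\<nu> a + 1))"
    using V_add[OF V_mono[OF V_nu[OF ne]] V_mono[OF V_neg[OF e]], of "min (\<nu> (a+e)) (\<nu> a + 1)"]
    by simp
  hence "\<nu> a \<ge> min (\<nu> (a+e)) (\<nu> a + 1)" using a by (simp add: V_def)
  with ge show ?thesis using ne by linarith
qed

lemma val_lim_V: "val_lim \<nu> s L \<longleftrightarrow> (\<forall>M. \<exists>N. \<forall>m\<ge>N. s m - L \<in> V M)"
  unfolding val_lim_def V_def by auto

lemma lim_V: assumes "val_lim \<nu> s L" and "\<forall>m\<ge>N0. s m - x \<in> V k"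
  shows "L - x \<in> V k"
proof -
  obtain N where N: "\<forall>m\<ge>N. s m - L \<in> V k" using assms(1) unfolding val_lim_V by blast
  define m where "m = max N N0"
  have "L - x = (s m - x) - (s m - L)" by simp
  also have "\<dots> \<in> V k"
  proof (rule V_diff)
    show "s m - x \<in> V k" "s m - L \<in> V k" using N assms(2) unfolding m_def by auto
  qed
  finally show ?thesis .
qed

lemma lim_unique: assumes "val_lim \<nu> s L1" "val_lim \<nu> s L2" shows "L1 = L2"
proof (rule ccontr)
  assume ne: "L1 \<noteq> L2"
  obtain N where N: "\<forall>m\<ge>N. s m - L2 \<in> V (\<nu> (L1 - L2) + 1)"
    using assms(2) unfolding val_lim_V by blast
  have "L1 - L2 \<in> V (\<nu> (L1 - L2) + 1)" using lim_V[OF assms(1) N] .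
  with ne show False by (simp add: V_def)
qed

lemma subst_p_eq: "val_lim \<nu> (\<lambda>N. \<Sum>\<beta><N. fps_nth c \<beta> * p ^ \<beta>) L \<Longrightarrow> subst_p \<nu> p c = L"
  unfolding subst_p_def by (rule the_equality) (auto intro: lim_unique)

lemma psum_diff: fixes m k :: nat shows "m \<le> k \<Longrightarrow> (\<Sum>\<beta><k. f \<beta>) - (\<Sum>\<beta><m. f \<beta>) = (\<Sum>\<beta>\<in>{m..<k}. (f \<beta> :: 'k))"
proof -
  assume "m \<le> k"
  then have "sum f {0..<k} = sum f {0..<m} + sum f {m..<k}"
    by (intro sum.atLeastLessThan_concat[symmetric]) auto
  then have "(\<Sum>\<beta><k. f \<beta>) = (\<Sum>\<beta><m. f \<beta>) + (\<Sum>\<beta>\<in>{m..<k}. f \<beta>)"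
    by (simp add: atLeast0LessThan)
  then show ?thesis by simp
qed

lemma conv_exists: assumes "\<forall>\<beta>. fps_nth c \<beta> \<in> V 0"
  shows "\<exists>L. val_lim \<nu> (\<lambda>N. \<Sum>\<beta><N. fps_nth c \<beta> * p ^ \<beta>) L"
proof -
  let ?s = "\<lambda>N. \<Sum>\<beta><N. fps_nth c \<beta> * p ^ \<beta>"
  have tail: "?s k - ?s m \<in> V (int m)" if "m \<le> k" for m k
  proof -
    have "?s k - ?s m = (\<Sum>\<beta>\<in>{m..<k}. fps_nth c \<beta> * p ^ \<beta>)" using psum_diff[OF that] .
    also have "\<dots> \<in> V (int m)"
    proof (rule V_sum)
      fix \<beta> assume "\<beta> \<in> {m..<k}"
      then have "fps_nth c \<beta> * p ^ \<beta> \<in> V (0 + int \<beta>)" using assms V_mult V_pow by blast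
      then show "fps_nth c \<beta> * p ^ \<beta> \<in> V (int m)" using \<open>\<beta> \<in> {m..<k}\<close> by (auto intro: V_mono)
    qed
    finally show ?thesis .
  qed
  have "val_cauchy \<nu> ?s"
    unfolding val_cauchy_def
  proof
    fix M :: int
    show "\<exists>N. \<forall>m\<ge>N. \<forall>k\<ge>N. ?s m = ?s k \<or> M \<le> \<nu> (?s m - ?s k)"
    proof (intro exI[of _ "nat M"] allI impI)
      fix m k assume m: "nat M \<le> m" and k: "nat M \<le> k"
      have "?s m - ?s k \<in> V M"
      proof (cases "m \<le> k")
        case True
        then have "?s k - ?s m \<in> V M" using tail[OF True] m by (auto intro: V_mono)
        then show ?thesis using V_neg by fastforce
      next
        case False
        then show ?thesis using tail[of k m] k by (auto intro: V_mono)
      qed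
      then show "?s m = ?s k \<or> M \<le> \<nu> (?s m - ?s k)" by (auto simp: V_def)
    qed
  qed
  then show ?thesis using comp unfolding val_complete_def by blast
qed

definition pick :: "'k \<Rightarrow> 'k" where
  "pick x = (if x \<in> V 1 then 0 else (SOME r. r \<in> R \<and> x - r \<in> V 1))"

lemma pick: assumes "x \<in> V 0" shows "pick x \<in> R" "x - pick x \<in> V 1"
proof -
  have "\<exists>r. r \<in> R \<and> x - r \<in> V 1"
  proof -
    have "x \<in> val_ring \<nu>" using assms val_ring_V by auto
    then obtain r where "r \<in> R" "x = r \<or> \<nu> (x - r) \<ge> 1" using dense unfolding dense_in_val_ring_def by blast
    then show ?thesis by (auto simp: V_def)
  qed
  then have "(SOME r. r \<in> R \<and> x - r \<in> V 1) \<in> R \<and> x - (SOME r. r \<in> R \<and> x - r \<in> V 1) \<in> V 1"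
    by (rule someI_ex)
  then have "pick x \<in> R \<and> x - pick x \<in> V 1"
    unfolding pick_def using R_0 by (cases "x \<in> V 1") auto
  then show "pick x \<in> R" "x - pick x \<in> V 1" by auto
qed

definition dseq :: "'k \<Rightarrow> nat \<Rightarrow> 'k" where
  "dseq b = rec_nat b (\<lambda>n dn. dn - pick (dn * inverse (p ^ n)) * p ^ n)"

definition digit :: "'k \<Rightarrow> nat \<Rightarrow> 'k" where
  "digit b n = pick (dseq b n * inverse (p ^ n))"

lemma dseq_0: "dseq b 0 = b" and dseq_Suc: "dseq b (Suc n) = dseq b n - digit b n * p ^ n"
  unfolding dseq_def digit_def by simp_all

lemma inv_pow_V: "inverse (p ^ n) \<in> V (- int n)"
  unfolding V_def by (simp add: nuinv p0 nupow)

lemma dseq_V: assumes "b \<in> V 0" shows "dseq b n \<in> V (int n)"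
proof (induction n)
  case 0 then show ?case using assms by (simp add: dseq_0)
next
  case (Suc n)
  have "dseq b n * inverse (p ^ n) \<in> V (int n + - int n)" by (rule V_mult[OF Suc inv_pow_V])
  then have y: "dseq b n * inverse (p ^ n) \<in> V 0" by simp
  have "dseq b (Suc n) = (dseq b n * inverse (p ^ n) - digit b n) * p ^ n"
    by (simp add: dseq_Suc algebra_simps p0 digit_def)
  also have "\<dots> \<in> V (1 + int n)" using V_mult[OF pick(2)[OF y] V_pow] unfolding digit_def .
  finally show ?case by (simp add: add.commute)
qed

lemma digit_R: assumes "b \<in> V 0" shows "digit b n \<in> R"
proof -
  have "dseq b n * inverse (p ^ n) \<in> V (int n + - int n)" by (rule V_mult[OF dseq_V[OF assms] inv_pow_V])
  then show ?thesis unfolding digit_def by (intro pick(1)) simp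
qed

lemma dseq_sum: "dseq b n = b - (\<Sum>\<beta><n. digit b \<beta> * p ^ \<beta>)"
  by (induction n) (simp_all add: dseq_0 dseq_Suc)

lemma digit_lim: assumes "b \<in> V 0" shows "val_lim \<nu> (\<lambda>N. \<Sum>\<beta><N. digit b \<beta> * p ^ \<beta>) b"
  unfolding val_lim_V
proof
  fix M
  show "\<exists>N. \<forall>m\<ge>N. (\<Sum>\<beta><m. digit b \<beta> * p ^ \<beta>) - b \<in> V M"
  proof (intro exI[of _ "nat M"] allI impI)
    fix m assume "nat M \<le> m"
    have "(\<Sum>\<beta><m. digit b \<beta> * p ^ \<beta>) - b = - dseq b m" by (simp add: dseq_sum)
    also have "\<dots> \<in> V M" using V_neg[OF dseq_V[OF assms, of m]] \<open>nat M \<le> m\<close> by (auto intro: V_mono)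
    finally show "(\<Sum>\<beta><m. digit b \<beta> * p ^ \<beta>) - b \<in> V M" .
  qed
qed

lemma digit_low: assumes "b \<noteq> 0" "b \<in> V 0"
  shows "n \<le> nat (\<nu> b) \<Longrightarrow> dseq b n = b \<and> (n < nat (\<nu> b) \<longrightarrow> digit b n = 0)"
proof (induction n)
  case 0
  have "0 < nat (\<nu> b) \<longrightarrow> digit b 0 = 0"
  proof
    assume "0 < nat (\<nu> b)"
    then have "b \<in> V 1" by (simp add: V_def)
    then show "digit b 0 = 0" by (simp add: digit_def dseq_0 pick_def)
  qed
  then show ?case by (simp add: dseq_0)
next
  case (Suc n)
  then have IH: "dseq b n = b" "digit b n = 0" by auto
  have 1: "dseq b (Suc n) = b" using IH by (simp add: dseq_Suc)
  have "digit b (Suc n) = 0" if lt: "Suc n < nat (\<nu> b)"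
  proof -
    have "\<nu> (b * inverse (p ^ Suc n)) = \<nu> b - int (Suc n)"
      using assms by (simp add: numult nuinv nupow p0 del: power_Suc)
    then have "1 \<le> \<nu> (b * inverse (p ^ Suc n))" using lt by linarith
    then have "b * inverse (p ^ Suc n) \<in> V 1" unfolding V_def mem_Collect_eq by blast
    then show ?thesis unfolding digit_def pick_def using 1 by simp
  qed
  then show ?case using 1 by simp
qed

lemma digit_lead: assumes "b \<noteq> 0" "b \<in> V 0"
  shows "digit b (nat (\<nu> b)) \<noteq> 0" "res (digit b (nat (\<nu> b))) = res (b * p powi (- \<nu> b))"
proof -
  let ?k = "nat (\<nu> b)"
  have nb: "\<nu> b \<ge> 0" using assms by (simp add: V_def)
  have d: "dseq b ?k = b" using digit_low[OF assms] by simp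
  have pw: "p powi (- \<nu> b) = inverse (p ^ ?k)"
    using nb by (simp add: power_int_def power_inverse)
  let ?y = "b * inverse (p ^ ?k)"
  have ny: "\<nu> ?y = 0" using assms nb by (simp add: numult nuinv nupow p0)
  have y0: "?y \<in> V 0" and y1: "?y \<notin> V 1" using assms ny p0 by (auto simp: V_def)
  have dg: "digit b ?k = pick ?y" unfolding digit_def d ..
  have "?y - pick ?y \<in> V 1" using pick(2)[OF y0] .
  then have "res ?y = res (pick ?y)" using res_eq[OF y0] by simp
  then show "res (digit b ?k) = res (b * p powi (- \<nu> b))" using dg pw by simp
  show "digit b ?k \<noteq> 0"
  proof
    assume "digit b ?k = 0"
    then have "?y \<in> V 1" using pick(2)[OF y0] dg by simp
    with y1 show False by simp
  qed
qed

end



definition lead :: "'k::zero fps \<Rightarrow> 'k fps" where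
  "lead c = Abs_fps (\<lambda>\<beta>. if \<beta> = subdegree c then fps_nth c \<beta> else 0)"

definition Lfun :: "real \<Rightarrow> real^'n::finite \<Rightarrow> (('n \<Rightarrow>\<^sub>0 nat) \<Rightarrow>\<^sub>0 'k::zero fps) \<Rightarrow> ('n \<Rightarrow>\<^sub>0 nat) \<Rightarrow> real" where
  "Lfun s v f \<alpha> = s * real (subdegree (Poly_Mapping.lookup f \<alpha>)) + wdot v \<alpha>"

lemma tw_le: assumes "s < 0" "fps_nth (Poly_Mapping.lookup f \<alpha>) \<beta> \<noteq> 0"
  shows "tw (s, v) \<alpha> \<beta> \<le> Lfun s v f \<alpha>"
    and "tw (s, v) \<alpha> \<beta> = Lfun s v f \<alpha> \<longleftrightarrow> \<beta> = subdegree (Poly_Mapping.lookup f \<alpha>)"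
proof -
  have ge: "\<beta> \<ge> subdegree (Poly_Mapping.lookup f \<alpha>)" using assms(2) by (meson leI nth_less_subdegree_zero)
  then have "s * real \<beta> \<le> s * real (subdegree (Poly_Mapping.lookup f \<alpha>))" using assms(1)
    by (simp add: mult_le_cancel_left)
  then show "tw (s, v) \<alpha> \<beta> \<le> Lfun s v f \<alpha>" by (simp add: tw_def Lfun_def)
  show "tw (s, v) \<alpha> \<beta> = Lfun s v f \<alpha> \<longleftrightarrow> \<beta> = subdegree (Poly_Mapping.lookup f \<alpha>)"
    using assms(1) by (auto simp: tw_def Lfun_def)
qed

lemma inu_desc: assumes s: "s < 0"
  shows "in_u (s, v) f = (\<Sum>\<alpha>\<in>Poly_Mapping.keys f. Poly_Mapping.single \<alpha>
            (if Lfun s v f \<alpha> = Max (Lfun s v f ` Poly_Mapping.keys f) then lead (Poly_Mapping.lookup f \<alpha>) else 0))"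
proof (cases "Poly_Mapping.keys f = {}")
  case True then show ?thesis by (simp add: in_u_def)
next
  case ne: False
  define M where "M = Max (Lfun s v f ` Poly_Mapping.keys f)"
  define S where "S = {tw (s, v) \<alpha> \<beta> | \<alpha> \<beta>. fps_nth (Poly_Mapping.lookup f \<alpha>) \<beta> \<noteq> 0}"
  have LM: "Lfun s v f \<alpha> \<le> M" if "\<alpha> \<in> Poly_Mapping.keys f" for \<alpha> unfolding M_def using that by simp
  have SM: "Sup S = M"
  proof (rule cSup_eq_maximum)
    obtain \<alpha>0 where a0: "\<alpha>0 \<in> Poly_Mapping.keys f" "Lfun s v f \<alpha>0 = M"
      unfolding M_def using ne by (metis (no_types, lifting) Max_in finite_imageI finite_keys imageE image_is_empty)
    have "Poly_Mapping.lookup f \<alpha>0 \<noteq> 0" using a0 by (simp add: in_keys_iff)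
    then have "fps_nth (Poly_Mapping.lookup f \<alpha>0) (subdegree (Poly_Mapping.lookup f \<alpha>0)) \<noteq> 0" by simp
    moreover have "tw (s, v) \<alpha>0 (subdegree (Poly_Mapping.lookup f \<alpha>0)) = M"
      using a0 by (simp add: tw_def Lfun_def)
    ultimately show "M \<in> S" unfolding S_def by blast
    show "\<And>y. y \<in> S \<Longrightarrow> y \<le> M"
    proof -
      fix y assume "y \<in> S"
      then obtain \<alpha> \<beta> where y: "y = tw (s, v) \<alpha> \<beta>" "fps_nth (Poly_Mapping.lookup f \<alpha>) \<beta> \<noteq> 0" unfolding S_def by blast
      then have "\<alpha> \<in> Poly_Mapping.keys f" by (auto simp: in_keys_iff)
      then show "y \<le> M" using tw_le(1)[OF s y(2), of v] LM[of \<alpha>] y(1) by linarith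
    qed
  qed
  have "in_u (s, v) f = (\<Sum>\<alpha>\<in>Poly_Mapping.keys f. Poly_Mapping.single \<alpha>
            (Abs_fps (\<lambda>\<beta>. if tw (s, v) \<alpha> \<beta> = M then fps_nth (Poly_Mapping.lookup f \<alpha>) \<beta> else 0)))"
    unfolding in_u_def Let_def SM[unfolded S_def] ..
  also have "\<dots> = (\<Sum>\<alpha>\<in>Poly_Mapping.keys f. Poly_Mapping.single \<alpha>
            (if Lfun s v f \<alpha> = M then lead (Poly_Mapping.lookup f \<alpha>) else 0))"
  proof (rule sum.cong[OF refl], rule arg_cong[where f="Poly_Mapping.single _"])
    fix \<alpha> assume a: "\<alpha> \<in> Poly_Mapping.keys f"
    show "Abs_fps (\<lambda>\<beta>. if tw (s, v) \<alpha> \<beta> = M then fps_nth (Poly_Mapping.lookup f \<alpha>) \<beta> else 0) =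
          (if Lfun s v f \<alpha> = M then lead (Poly_Mapping.lookup f \<alpha>) else 0)"
    proof (rule fps_ext)
      fix \<beta>
      show "fps_nth (Abs_fps (\<lambda>\<beta>. if tw (s, v) \<alpha> \<beta> = M then fps_nth (Poly_Mapping.lookup f \<alpha>) \<beta> else 0)) \<beta> =
            fps_nth (if Lfun s v f \<alpha> = M then lead (Poly_Mapping.lookup f \<alpha>) else 0) \<beta>"
      proof (cases "fps_nth (Poly_Mapping.lookup f \<alpha>) \<beta> = 0")
        case True then show ?thesis using a by (auto simp: lead_def in_keys_iff)
      next
        case False
        note t = tw_le[OF s False, of v]
        show ?thesis
        proof (cases "tw (s, v) \<alpha> \<beta> = M")
          case True
          then have "Lfun s v f \<alpha> = M" "\<beta> = subdegree (Poly_Mapping.lookup f \<alpha>)" using t LM[OF a] by auto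
          then show ?thesis using True by (simp add: lead_def)
        next
          case False
          have "\<not> (Lfun s v f \<alpha> = M \<and> \<beta> = subdegree (Poly_Mapping.lookup f \<alpha>))" using False t by auto
          then show ?thesis using False by (auto simp: lead_def)
        qed
      qed
    qed
  qed
  finally show ?thesis unfolding M_def .
qed

lemma wdot_scale: "wdot (c *\<^sub>R v) \<alpha> = c * wdot v \<alpha>"
  unfolding wdot_def by (simp add: sum_distrib_left algebra_simps)

lemma inu_scale: assumes "s < 0" "c > 0"
  shows "in_u (c * s, c *\<^sub>R v) f = in_u (s, v) f"
proof -
  have cs: "c * s < 0" using assms by (simp add: mult_pos_neg)
  have L: "Lfun (c * s) (c *\<^sub>R v) f \<alpha> = c * Lfun s v f \<alpha>" for \<alpha>
    unfolding Lfun_def wdot_scale by (simp add: algebra_simps)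
  have mono: "mono ((*) c)" using assms(2) by (auto intro!: monoI)
  have MM: "Max (Lfun (c * s) (c *\<^sub>R v) f ` Poly_Mapping.keys f) = c * Max (Lfun s v f ` Poly_Mapping.keys f)"
    if "Poly_Mapping.keys f \<noteq> {}"
  proof -
    have "Lfun (c * s) (c *\<^sub>R v) f ` Poly_Mapping.keys f = (*) c ` (Lfun s v f ` Poly_Mapping.keys f)"
      unfolding L by (simp add: image_image)
    then show ?thesis using mono_Max_commute[OF mono, of "Lfun s v f ` Poly_Mapping.keys f"] that by simp
  qed
  show ?thesis
    unfolding inu_desc[OF assms(1)] inu_desc[OF cs]
  proof (rule sum.cong[OF refl])
    fix \<alpha> assume a: "\<alpha> \<in> Poly_Mapping.keys f"
    then have "Poly_Mapping.keys f \<noteq> {}" by auto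
    then show "Poly_Mapping.single \<alpha> (if Lfun (c * s) (c *\<^sub>R v) f \<alpha> = Max (Lfun (c * s) (c *\<^sub>R v) f ` Poly_Mapping.keys f) then lead (Poly_Mapping.lookup f \<alpha>) else 0) =
      Poly_Mapping.single \<alpha> (if Lfun s v f \<alpha> = Max (Lfun s v f ` Poly_Mapping.keys f) then lead (Poly_Mapping.lookup f \<alpha>) else 0)"
      using MM L assms(2) by simp
  qed
qed

lemma lookup_sum_single: "finite K \<Longrightarrow>
  Poly_Mapping.lookup (\<Sum>\<alpha>\<in>K. Poly_Mapping.single \<alpha> (g \<alpha>)) \<gamma> = (if \<gamma> \<in> K then g \<gamma> else 0)"
  by (simp add: lookup_sum lookup_single when_def)

lemma pm_expand: "q = (\<Sum>\<alpha>\<in>Poly_Mapping.keys q. Poly_Mapping.single \<alpha> (Poly_Mapping.lookup q \<alpha>))"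
  by (rule poly_mapping_eqI) (simp add: lookup_sum_single in_keys_iff)

lemma mult_expand: fixes a b :: "'a::comm_monoid_add \<Rightarrow>\<^sub>0 'b::comm_semiring_1"
  shows "a * b = (\<Sum>\<alpha>\<in>Poly_Mapping.keys a. \<Sum>\<beta>\<in>Poly_Mapping.keys b.
      Poly_Mapping.single (\<alpha> + \<beta>) (Poly_Mapping.lookup a \<alpha> * Poly_Mapping.lookup b \<beta>))"
proof -
  have "a * b = (\<Sum>\<alpha>\<in>Poly_Mapping.keys a. Poly_Mapping.single \<alpha> (Poly_Mapping.lookup a \<alpha>)) *
      (\<Sum>\<beta>\<in>Poly_Mapping.keys b. Poly_Mapping.single \<beta> (Poly_Mapping.lookup b \<beta>))"
    using pm_expand[of a] pm_expand[of b] by simp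
  also have "\<dots> = (\<Sum>\<alpha>\<in>Poly_Mapping.keys a. \<Sum>\<beta>\<in>Poly_Mapping.keys b.
      Poly_Mapping.single \<alpha> (Poly_Mapping.lookup a \<alpha>) * Poly_Mapping.single \<beta> (Poly_Mapping.lookup b \<beta>))"
    by (rule sum_product)
  finally show ?thesis by (simp add: mult_single)
qed

lemma lookup_map0: "g 0 = 0 \<Longrightarrow> Poly_Mapping.lookup (Poly_Mapping.map g q) \<alpha> = g (Poly_Mapping.lookup q \<alpha>)"
  by (simp add: Poly_Mapping.map.rep_eq when_def)

section \<open>Ideal generation\<close>

lemma gen_ideal_finsum:
  assumes "finite F" "\<And>i. i \<in> F \<Longrightarrow> h i \<in> S \<and> g i \<in> G"
  shows "(\<Sum>i\<in>F. h i * g i) \<in> gen_ideal S G"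
proof -
  obtain e where e: "bij_betw e {0..<card F} F" using ex_bij_betw_nat_finite[OF assms(1)] by blast
  have "(\<Sum>i\<in>F. h i * g i) = (\<Sum>j\<in>{0..<card F}. h (e j) * g (e j))"
    using sum.reindex_bij_betw[OF e, of "\<lambda>i. h i * g i"] by simp
  also have "\<dots> = (\<Sum>j<card F. h (e j) * g (e j))" by (simp add: atLeast0LessThan)
  also have "\<dots> \<in> gen_ideal S G"
    unfolding gen_ideal_def using assms(2) bij_betwE[OF e] by fastforce
  finally show ?thesis .
qed

lemma gen_ideal_elim: "x \<in> gen_ideal S G \<Longrightarrow>
   \<exists>m h g. x = (\<Sum>i<(m::nat). h i * g i) \<and> (\<forall>i<m. h i \<in> S \<and> g i \<in> G)"
  unfolding gen_ideal_def by blast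

lemma gen_ideal_add: assumes "x \<in> gen_ideal S G" "y \<in> gen_ideal S G" shows "x + y \<in> gen_ideal S G"
proof -
  obtain m1 h1 g1 where x: "x = (\<Sum>i<(m1::nat). h1 i * g1 i)" "\<forall>i<m1. h1 i \<in> S \<and> g1 i \<in> G"
    using gen_ideal_elim[OF assms(1)] by blast
  obtain m2 h2 g2 where y: "y = (\<Sum>i<(m2::nat). h2 i * g2 i)" "\<forall>i<m2. h2 i \<in> S \<and> g2 i \<in> G"
    using gen_ideal_elim[OF assms(2)] by blast
  define h where "h = case_sum h1 h2"
  define g where "g = case_sum g1 g2"
  have "x + y = (\<Sum>z\<in>{..<m1} <+> {..<m2}. h z * g z)"
    by (simp add: sum.Plus x y h_def g_def comp_def)
  also have "\<dots> \<in> gen_ideal S G"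
    by (rule gen_ideal_finsum) (auto simp: h_def g_def x y)
  finally show ?thesis .
qed

lemma gen_ideal_0: "0 \<in> gen_ideal S G"
  unfolding gen_ideal_def by (rule CollectI, rule exI[of _ 0]) simp

lemma gen_ideal_gen: "1 \<in> S \<Longrightarrow> g \<in> G \<Longrightarrow> g \<in> gen_ideal S G"
  using gen_ideal_finsum[of "{()}" "\<lambda>_. 1" S "\<lambda>_. g" G] by simp

lemma gen_ideal_mult: assumes "x \<in> gen_ideal UNIV G" shows "r * x \<in> gen_ideal UNIV G"
proof -
  obtain m h g where x: "x = (\<Sum>i<(m::nat). h i * g i)" "\<forall>i<m. g i \<in> G"
    using gen_ideal_elim[OF assms(1)] by blast
  have "r * x = (\<Sum>i<m. (r * h i) * g i)" by (simp add: x sum_distrib_left mult.assoc)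
  also have "\<dots> \<in> gen_ideal UNIV G" by (rule gen_ideal_finsum) (use x in auto)
  finally show ?thesis .
qed

lemma gen_ideal_sum: "(\<And>i. i \<in> F \<Longrightarrow> x i \<in> gen_ideal S G) \<Longrightarrow> sum x F \<in> gen_ideal S G"
  by (induction F rule: infinite_finite_induct) (auto intro: gen_ideal_add gen_ideal_0)

lemma gen_ideal_sub: assumes "G \<subseteq> gen_ideal UNIV H" shows "gen_ideal UNIV G \<subseteq> gen_ideal UNIV H"
proof
  fix x assume "x \<in> gen_ideal UNIV G"
  then obtain m h g where x: "x = (\<Sum>i<(m::nat). h i * g i)" "\<forall>i<m. g i \<in> G"
    using gen_ideal_elim by blast
  show "x \<in> gen_ideal UNIV H" unfolding x(1)
    by (rule gen_ideal_sum, rule gen_ideal_mult) (use x assms in auto)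
qed

lemma gen_ideal_mono: "G \<subseteq> G' \<Longrightarrow> gen_ideal S G \<subseteq> gen_ideal S G'"
  unfolding gen_ideal_def by blast




context vsetting begin

definition AR :: "'k fps set" where
  "AR = {c. (\<exists>P. c = fps_of_poly P) \<and> (\<forall>\<beta>. fps_nth c \<beta> \<in> R)}"

definition polyof :: "'k fps \<Rightarrow> 'k poly" where "polyof c = (THE P. fps_of_poly P = c)"
definition ev1 :: "'k fps \<Rightarrow> 'k" where "ev1 c = poly (polyof c) 1"
definition phi :: "'k fps \<Rightarrow> 'f" where "phi c = res (ev1 c)"
definition Phi :: "(('n::finite \<Rightarrow>\<^sub>0 nat) \<Rightarrow>\<^sub>0 'k fps) \<Rightarrow> (('n \<Rightarrow>\<^sub>0 nat) \<Rightarrow>\<^sub>0 'f)" where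
  "Phi q = Poly_Mapping.map phi q"

lemma polyof_fps [simp]: "polyof (fps_of_poly P) = P"
  unfolding polyof_def by (rule the_equality) (auto simp: fps_of_poly_eq_iff)

lemma ev1_fps [simp]: "ev1 (fps_of_poly P) = poly P 1" by (simp add: ev1_def)

lemma ev1_R: assumes "c \<in> AR" shows "ev1 c \<in> R"
proof -
  obtain P where P: "c = fps_of_poly P" "\<forall>\<beta>. fps_nth c \<beta> \<in> R" using assms by (auto simp: AR_def)
  have "ev1 c = (\<Sum>i\<le>degree P. coeff P i * 1 ^ i)" by (simp add: P(1) poly_altdef del: power_one)
  also have "\<dots> \<in> R" using P by (intro R_sum) (simp)
  finally show ?thesis .
qed

lemma AR_0: "0 \<in> AR" unfolding AR_def using R_0 by (auto intro: exI[of _ 0])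

lemma AR_add: "a \<in> AR \<Longrightarrow> b \<in> AR \<Longrightarrow> a + b \<in> AR"
  unfolding AR_def by (auto intro: R_add exI[of _ "_ + _"] simp: fps_of_poly_add)

lemma AR_mult: assumes "a \<in> AR" "b \<in> AR" shows "a * b \<in> AR"
proof -
  obtain P Q where "a = fps_of_poly P" "b = fps_of_poly Q" using assms by (auto simp: AR_def)
  then have "a * b = fps_of_poly (P * Q)" by (simp add: fps_of_poly_mult)
  moreover have "fps_nth (a * b) n \<in> R" for n
    unfolding fps_mult_nth using assms by (intro R_sum R_mult) (auto simp: AR_def)
  ultimately show ?thesis unfolding AR_def by blast
qed

lemma phi_0 [simp]: "phi 0 = 0"
  using ev1_fps[of 0] by (simp add: phi_def del: ev1_fps)

lemma phi_add: assumes "a \<in> AR" "b \<in> AR" shows "phi (a + b) = phi a + phi b"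
proof -
  obtain P Q where PQ: "a = fps_of_poly P" "b = fps_of_poly Q" using assms by (auto simp: AR_def)
  have "ev1 (a + b) = ev1 a + ev1 b" by (simp add: PQ fps_of_poly_add[symmetric] poly_add del: fps_of_poly_add)
  then show ?thesis unfolding phi_def using res_add[OF R_V[OF ev1_R[OF assms(1)]] R_V[OF ev1_R[OF assms(2)]]] by simp
qed

lemma phi_mult: assumes "a \<in> AR" "b \<in> AR" shows "phi (a * b) = phi a * phi b"
proof -
  obtain P Q where PQ: "a = fps_of_poly P" "b = fps_of_poly Q" using assms by (auto simp: AR_def)
  have "ev1 (a * b) = ev1 a * ev1 b" by (simp add: PQ fps_of_poly_mult[symmetric] poly_mult del: fps_of_poly_mult)
  then show ?thesis unfolding phi_def using res_mult[OF R_V[OF ev1_R[OF assms(1)]] R_V[OF ev1_R[OF assms(2)]]] by simp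
qed

lemma RtxPoly_iff: "q \<in> RtxPoly R \<longleftrightarrow> (\<forall>\<alpha>. Poly_Mapping.lookup q \<alpha> \<in> AR)"
proof
  assume q: "q \<in> RtxPoly R"
  show "\<forall>\<alpha>. Poly_Mapping.lookup q \<alpha> \<in> AR"
  proof
    fix \<alpha>
    let ?c = "Poly_Mapping.lookup q \<alpha>"
    have R: "\<forall>\<beta>. fps_nth ?c \<beta> \<in> R" and fin: "finite {\<beta>. fps_nth ?c \<beta> \<noteq> 0}"
      using q by (auto simp: RtxPoly_def RtX_def)
    obtain N where N: "\<forall>\<beta>\<in>{\<beta>. fps_nth ?c \<beta> \<noteq> 0}. \<beta> < N" using finite_nat_bounded[OF fin] by auto
    have "?c = fps_cutoff N ?c" by (rule fps_ext) (use N in auto)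
    then have "?c = fps_of_poly (truncate_fps N ?c)" by simp
    then show "?c \<in> AR" using R unfolding AR_def by blast
  qed
next
  assume a: "\<forall>\<alpha>. Poly_Mapping.lookup q \<alpha> \<in> AR"
  show "q \<in> RtxPoly R" unfolding RtxPoly_def RtX_def
  proof (intro CollectI conjI allI)
    fix \<alpha> \<beta>
    show "fps_nth (Poly_Mapping.lookup q \<alpha>) \<beta> \<in> R" using a by (auto simp: AR_def)
  next
    fix \<alpha>
    obtain P where P: "Poly_Mapping.lookup q \<alpha> = fps_of_poly P" using a by (auto simp: AR_def)
    have "{\<beta>. fps_nth (Poly_Mapping.lookup q \<alpha>) \<beta> \<noteq> 0} \<subseteq> {..degree P}"
      using P by (auto simp: coeff_eq_0 intro: ccontr)
    then show "finite {\<beta>. fps_nth (Poly_Mapping.lookup q \<alpha>) \<beta> \<noteq> 0}" by (rule finite_subset) simp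
  qed
qed

lemma Rtx_0: "0 \<in> RtxPoly R" by (simp add: RtxPoly_iff AR_0)

lemma Rtx_add: "a \<in> RtxPoly R \<Longrightarrow> b \<in> RtxPoly R \<Longrightarrow> a + b \<in> RtxPoly R"
  by (simp add: RtxPoly_iff lookup_add AR_add)

lemma Rtx_sum: "(\<And>i. i \<in> F \<Longrightarrow> x i \<in> RtxPoly R) \<Longrightarrow> sum x F \<in> RtxPoly R"
  by (induction F rule: infinite_finite_induct) (auto intro: Rtx_add Rtx_0)

lemma Rtx_single: "c \<in> AR \<Longrightarrow> Poly_Mapping.single \<gamma> c \<in> RtxPoly R"
  by (simp add: RtxPoly_iff lookup_single when_def AR_0)

lemma Rtx_mult: assumes "a \<in> RtxPoly R" "b \<in> RtxPoly R" shows "a * b \<in> RtxPoly R"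
  unfolding mult_expand[of a b] using assms
  by (intro Rtx_sum Rtx_single AR_mult) (auto simp: RtxPoly_iff)

lemma Rtx_1: "1 \<in> RtxPoly R"
proof -
  have "(1 :: 'k fps) = fps_of_poly 1" by simp
  then have "(1 :: 'k fps) \<in> AR" unfolding AR_def using R_0 R_1 by (auto simp: fps_one_nth)
  then have "Poly_Mapping.single 0 (1::'k fps) \<in> RtxPoly R" by (rule Rtx_single)
  then show ?thesis by (simp add: one_poly_mapping_def)
qed

lemma Phi_add: assumes "a \<in> RtxPoly R" "b \<in> RtxPoly R" shows "Phi (a + b) = Phi a + Phi b"
  by (rule poly_mapping_eqI) (use assms in \<open>simp add: Phi_def lookup_map0 lookup_add phi_add RtxPoly_iff\<close>)

lemma Phi_0: "Phi 0 = 0" by (rule poly_mapping_eqI) (simp add: Phi_def lookup_map0)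

lemma Phi_sum: "(\<And>i. i \<in> F \<Longrightarrow> x i \<in> RtxPoly R) \<Longrightarrow> Phi (sum x F) = (\<Sum>i\<in>F. Phi (x i))"
proof (induction F rule: infinite_finite_induct)
  case (insert i F)
  then show ?case by (simp add: Phi_add Rtx_sum)
qed (simp_all add: Phi_0)

lemma Phi_single: "Phi (Poly_Mapping.single \<gamma> c) = Poly_Mapping.single \<gamma> (phi c)"
  unfolding Phi_def by (rule map_single) simp

lemma Phi_expand: assumes "a \<in> RtxPoly R"
  shows "Phi a = (\<Sum>\<alpha>\<in>Poly_Mapping.keys a. Poly_Mapping.single \<alpha> (phi (Poly_Mapping.lookup a \<alpha>)))"
proof -
  have "Phi a = Phi (\<Sum>\<alpha>\<in>Poly_Mapping.keys a. Poly_Mapping.single \<alpha> (Poly_Mapping.lookup a \<alpha>))"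
    using pm_expand[of a] by simp
  also have "\<dots> = (\<Sum>\<alpha>\<in>Poly_Mapping.keys a. Poly_Mapping.single \<alpha> (phi (Poly_Mapping.lookup a \<alpha>)))"
  proof -
    have "\<forall>\<alpha>. Poly_Mapping.lookup a \<alpha> \<in> AR" using assms by (simp add: RtxPoly_iff)
    then have "\<And>\<alpha>. Poly_Mapping.single \<alpha> (Poly_Mapping.lookup a \<alpha>) \<in> RtxPoly R" using Rtx_single by blast
    then show ?thesis by (subst Phi_sum) (auto simp: Phi_single)
  qed
  finally show ?thesis .
qed

lemma Phi_mult: assumes "a \<in> RtxPoly R" "b \<in> RtxPoly R" shows "Phi (a * b) = Phi a * Phi b"
proof -
  have la: "Poly_Mapping.lookup a \<alpha> \<in> AR" and lb: "Poly_Mapping.lookup b \<alpha> \<in> AR" for \<alpha>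
    using assms by (auto simp: RtxPoly_iff)
  have "Phi (a * b) = (\<Sum>\<alpha>\<in>Poly_Mapping.keys a. \<Sum>\<beta>\<in>Poly_Mapping.keys b.
      Phi (Poly_Mapping.single (\<alpha> + \<beta>) (Poly_Mapping.lookup a \<alpha> * Poly_Mapping.lookup b \<beta>)))"
    unfolding mult_expand[of a b] using la lb
    by (subst Phi_sum, (intro Rtx_sum Rtx_single AR_mult; simp))+ (rule refl)
  also have "\<dots> = (\<Sum>\<alpha>\<in>Poly_Mapping.keys a. \<Sum>\<beta>\<in>Poly_Mapping.keys b.
      Poly_Mapping.single \<alpha> (phi (Poly_Mapping.lookup a \<alpha>)) * Poly_Mapping.single \<beta> (phi (Poly_Mapping.lookup b \<beta>)))"
    using la lb by (simp add: Phi_single phi_mult mult_single)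
  also have "\<dots> = Phi a * Phi b"
    unfolding Phi_expand[OF assms(1)] Phi_expand[OF assms(2)] by (rule sum_product[symmetric])
  finally show ?thesis .
qed

end



context vsetting begin

lemma tail_V: assumes "\<forall>\<beta>. fps_nth c \<beta> \<in> V 0"
  shows "(\<Sum>\<beta>\<in>{m..<k}. fps_nth c \<beta> * p ^ \<beta>) \<in> V (int m)"
proof (rule V_sum)
  fix \<beta> assume b: "\<beta> \<in> {m..<k}"
  then have "fps_nth c \<beta> * p ^ \<beta> \<in> V (0 + int \<beta>)" using assms V_mult V_pow by blast
  then show "fps_nth c \<beta> * p ^ \<beta> \<in> V (int m)" using b by (auto intro: V_mono)
qed

lemma subst_p_0 [simp]: "subst_p \<nu> p 0 = 0"
  by (rule subst_p_eq) (simp add: val_lim_def)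

lemma lookup_pi: "Poly_Mapping.lookup (pi_map \<nu> p f) \<alpha> = subst_p \<nu> p (Poly_Mapping.lookup f \<alpha>)"
  unfolding pi_map_def by (rule lookup_map0) simp

lemma lead_AR: assumes "\<forall>\<beta>. fps_nth c \<beta> \<in> R"
  shows "lead c = fps_of_poly (monom (fps_nth c (subdegree c)) (subdegree c))" "lead c \<in> AR"
proof -
  show l: "lead c = fps_of_poly (monom (fps_nth c (subdegree c)) (subdegree c))"
    by (rule fps_ext) (simp add: lead_def)
  have "fps_nth (lead c) \<beta> \<in> R" for \<beta> using assms R_0 by (simp add: lead_def)
  then show "lead c \<in> AR" unfolding AR_def using l by blast
qed

lemma phi_lead: assumes "\<forall>\<beta>. fps_nth c \<beta> \<in> R"
  shows "phi (lead c) = res (fps_nth c (subdegree c))"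
  unfolding phi_def lead_AR(1)[OF assms] by (simp add: poly_monom)

lemma RtX_R: "f \<in> RtX R \<Longrightarrow> \<forall>\<beta>. fps_nth (Poly_Mapping.lookup f \<alpha>) \<beta> \<in> R"
  unfolding RtX_def by auto

lemma inu_R: assumes "f \<in> RtX R" shows "in_u (-1, v) f \<in> RtxPoly R"
  unfolding inu_desc[of "-1", simplified]
  by (intro Rtx_sum Rtx_single) (use lead_AR(2)[OF RtX_R[OF assms]] AR_0 in auto)

lemma Phi_inu: assumes "f \<in> RtX R"
  shows "Poly_Mapping.lookup (Phi (in_u (-1, v) f)) \<alpha> =
    (if \<alpha> \<in> Poly_Mapping.keys f \<and> Lfun (-1) v f \<alpha> = Max (Lfun (-1) v f ` Poly_Mapping.keys f)
     then res (fps_nth (Poly_Mapping.lookup f \<alpha>) (subdegree (Poly_Mapping.lookup f \<alpha>))) else 0)"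
  unfolding inu_desc[of "-1", simplified] Phi_def lookup_map0[of phi, OF phi_0]
  by (simp add: lookup_sum_single phi_lead[OF RtX_R[OF assms]])

lemma coef_E: assumes R: "\<forall>\<beta>. fps_nth c \<beta> \<in> R"
  shows "subst_p \<nu> p c - fps_nth c (subdegree c) * p ^ subdegree c \<in> V (int (subdegree c) + 1)"
proof -
  let ?b = "subdegree c" and ?x = "fps_nth c (subdegree c)"
  let ?s = "\<lambda>N. \<Sum>\<beta><N. fps_nth c \<beta> * p ^ \<beta>"
  have V0: "\<forall>\<beta>. fps_nth c \<beta> \<in> V 0" using R R_V by blast
  obtain L where L: "val_lim \<nu> ?s L" using conv_exists[OF V0] by blast
  have sL: "subst_p \<nu> p c = L" using subst_p_eq[OF L] .
  have low: "(\<Sum>\<beta><?b. fps_nth c \<beta> * p ^ \<beta>) = 0"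
    by (rule sum.neutral) (auto dest: nth_less_subdegree_zero)
  have "\<forall>m\<ge>Suc ?b. ?s m - ?x * p ^ ?b \<in> V (int ?b + 1)"
  proof (intro allI impI)
    fix m assume m: "Suc ?b \<le> m"
    have "?s m - ?s (Suc ?b) = (\<Sum>\<beta>\<in>{Suc ?b..<m}. fps_nth c \<beta> * p ^ \<beta>)" by (rule psum_diff[OF m])
    moreover have "?s (Suc ?b) = ?x * p ^ ?b" using low by simp
    ultimately have "?s m - ?x * p ^ ?b = (\<Sum>\<beta>\<in>{Suc ?b..<m}. fps_nth c \<beta> * p ^ \<beta>)" by simp
    also have "\<dots> \<in> V (int (Suc ?b))" by (rule tail_V[OF V0])
    finally show "?s m - ?x * p ^ ?b \<in> V (int ?b + 1)" by (simp add: add.commute)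
  qed
  from lim_V[OF L this] show ?thesis unfolding sL .
qed

lemma powi_cancel: "p ^ n * p powi (- int n) = 1"
  by (simp add: power_int_minus p0)

lemma coef_F: assumes R: "\<forall>\<beta>. fps_nth c \<beta> \<in> R"
  shows "subst_p \<nu> p c \<in> V (int (subdegree c))"
proof -
  let ?b = "subdegree c" and ?x = "fps_nth c (subdegree c)"
  have "?x * p ^ ?b \<in> V (0 + int ?b)" using V_mult[OF R_V V_pow] R by blast
  moreover have "subst_p \<nu> p c - ?x * p ^ ?b \<in> V (int ?b)" using V_mono[OF coef_E[OF R]] by simp
  ultimately have "(subst_p \<nu> p c - ?x * p ^ ?b) + ?x * p ^ ?b \<in> V (int ?b)" by (intro V_add) simp_all
  then show ?thesis by simp
qed

lemma coef_H: assumes R: "\<forall>\<beta>. fps_nth c \<beta> \<in> R" and r: "res (fps_nth c (subdegree c)) = 0"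
  shows "subst_p \<nu> p c \<in> V (int (subdegree c) + 1)"
proof -
  let ?b = "subdegree c" and ?x = "fps_nth c (subdegree c)"
  have "?x \<in> V 1" using res_zero[OF R_V] R r by blast
  then have "?x * p ^ ?b \<in> V (1 + int ?b)" using V_mult[OF _ V_pow] by blast
  moreover note coef_E[OF R]
  ultimately have "(subst_p \<nu> p c - ?x * p ^ ?b) + ?x * p ^ ?b \<in> V (int ?b + 1)" by (intro V_add) (simp_all add: add.commute)
  then show ?thesis by simp
qed

lemma coef_G: assumes R: "\<forall>\<beta>. fps_nth c \<beta> \<in> R" and r: "res (fps_nth c (subdegree c)) \<noteq> 0"
  shows "subst_p \<nu> p c \<noteq> 0" "\<nu> (subst_p \<nu> p c) = int (subdegree c)"
    "res (subst_p \<nu> p c * p powi (- \<nu> (subst_p \<nu> p c))) = res (fps_nth c (subdegree c))"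
proof -
  let ?b = "subdegree c" and ?x = "fps_nth c (subdegree c)" and ?a = "subst_p \<nu> p c"
  define e where "e = ?a - ?x * p ^ ?b"
  have x0: "?x \<in> V 0" using R R_V by blast
  have x1: "?x \<notin> V 1" using res_zero[OF x0] r by blast
  then have xne: "?x \<noteq> 0" by auto
  have nx: "\<nu> ?x = 0" using x0 x1 xne by (auto simp: V_def)
  have nxp: "\<nu> (?x * p ^ ?b) = int ?b" using xne p0 by (simp add: numult nupow nx)
  have e: "e \<in> V (\<nu> (?x * p ^ ?b) + 1)" unfolding e_def nxp by (rule coef_E[OF R])
  have xpne: "?x * p ^ ?b \<noteq> 0" using xne p0 by simp
  have ae: "?a = ?x * p ^ ?b + e" unfolding e_def by simp
  from strict[OF xpne e] show a0: "?a \<noteq> 0" and na: "\<nu> ?a = int ?b" unfolding ae[symmetric] nxp by auto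
  have "?a * p powi (- int ?b) = ?x + e * p powi (- int ?b)"
    unfolding ae by (simp add: algebra_simps powi_cancel)
  moreover have "e * p powi (- int ?b) \<in> V (int ?b + 1 + - int ?b)"
    using V_mult[OF e[unfolded nxp] V_powi] .
  ultimately have "?x - ?a * p powi (- int ?b) \<in> V 1" using V_neg by fastforce
  then have "res ?x = res (?a * p powi (- int ?b))" by (rule res_eq[OF x0])
  then show "res (?a * p powi (- \<nu> ?a)) = res ?x" unfolding na by simp
qed

end



context vsetting begin

lemma claimA: assumes f: "f \<in> RtX R"
  shows "Phi (in_u (-1, v) f) = 0 \<or> Phi (in_u (-1, v) f) = in_nu \<nu> res p v (pi_map \<nu> p f)"
proof -
  define K where "K = Poly_Mapping.keys f"
  define L where "L = Lfun (-1) v f"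
  define M where "M = Max (L ` K)"
  define a where "a = pi_map \<nu> p f"
  define c where "c = Poly_Mapping.lookup f"
  define b0 where "b0 = (\<lambda>\<alpha>. subdegree (c \<alpha>))"
  define x where "x = (\<lambda>\<alpha>. fps_nth (c \<alpha>) (b0 \<alpha>))"
  define U where "U = {\<alpha>\<in>K. L \<alpha> = M \<and> res (x \<alpha>) \<noteq> 0}"
  have Rc: "\<forall>\<beta>. fps_nth (c \<alpha>) \<beta> \<in> R" for \<alpha> unfolding c_def using RtX_R[OF f] by blast
  have Lv: "L \<alpha> = wdot v \<alpha> - real (b0 \<alpha>)" for \<alpha> unfolding L_def Lfun_def b0_def c_def by simp
  have la: "Poly_Mapping.lookup a \<alpha> = subst_p \<nu> p (c \<alpha>)" for \<alpha> unfolding a_def c_def by (rule lookup_pi)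
  have finK: "finite K" unfolding K_def by simp
  have LM: "\<alpha> \<in> K \<Longrightarrow> L \<alpha> \<le> M" for \<alpha> unfolding M_def using finK by simp
  have PI: "Poly_Mapping.lookup (Phi (in_u (-1, v) f)) \<alpha> = (if \<alpha> \<in> K \<and> L \<alpha> = M then res (x \<alpha>) else 0)" for \<alpha>
    unfolding Phi_inu[OF f] K_def L_def M_def x_def b0_def c_def ..
  show ?thesis
  proof (cases "U = {}")
    case True
    have "Phi (in_u (-1, v) f) = 0"
      by (rule poly_mapping_eqI) (use True in \<open>auto simp: PI U_def\<close>)
    then show ?thesis by simp
  next
    case False
    then obtain \<alpha>0 where a0: "\<alpha>0 \<in> U" by blast
    define wt where "wt = (\<lambda>\<alpha>. wdot v \<alpha> - real_of_int (\<nu> (Poly_Mapping.lookup a \<alpha>)))"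
    have keysa: "Poly_Mapping.keys a \<subseteq> K"
    proof
      fix \<alpha> assume "\<alpha> \<in> Poly_Mapping.keys a"
      then have "subst_p \<nu> p (c \<alpha>) \<noteq> 0" using la by (simp add: in_keys_iff)
      then have "c \<alpha> \<noteq> 0" by auto
      then show "\<alpha> \<in> K" unfolding K_def c_def by (simp add: in_keys_iff)
    qed
    have wt_le: "wt \<alpha> \<le> L \<alpha>" if "\<alpha> \<in> Poly_Mapping.keys a" for \<alpha>
    proof -
      have "Poly_Mapping.lookup a \<alpha> \<in> V (int (b0 \<alpha>))" unfolding la b0_def by (rule coef_F[OF Rc])
      moreover have "Poly_Mapping.lookup a \<alpha> \<noteq> 0" using that by (simp add: in_keys_iff)
      ultimately have "\<nu> (Poly_Mapping.lookup a \<alpha>) \<ge> int (b0 \<alpha>)" by (simp add: V_def)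
      then show ?thesis unfolding wt_def Lv by linarith
    qed
    have wt_U: "\<alpha> \<in> U" if "\<alpha> \<in> Poly_Mapping.keys a" "wt \<alpha> = M" for \<alpha>
    proof -
      have aK: "\<alpha> \<in> K" using that keysa by auto
      have rx: "res (x \<alpha>) \<noteq> 0"
      proof
        assume "res (x \<alpha>) = 0"
        then have "Poly_Mapping.lookup a \<alpha> \<in> V (int (b0 \<alpha>) + 1)"
          unfolding la b0_def using coef_H[OF Rc] x_def b0_def by simp
        moreover have "Poly_Mapping.lookup a \<alpha> \<noteq> 0" using that by (simp add: in_keys_iff)
        ultimately have "\<nu> (Poly_Mapping.lookup a \<alpha>) \<ge> int (b0 \<alpha>) + 1" by (simp add: V_def)
        then have "wt \<alpha> \<le> L \<alpha> - 1" unfolding wt_def Lv by linarith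
        with LM[OF aK] that(2) show False by linarith
      qed
      then have "\<nu> (Poly_Mapping.lookup a \<alpha>) = int (b0 \<alpha>)"
        unfolding la b0_def using coef_G(2)[OF Rc] x_def b0_def by simp
      then have "wt \<alpha> = L \<alpha>" unfolding wt_def Lv by simp
      then show ?thesis using that aK rx unfolding U_def by simp
    qed
    have U_wt: "\<alpha> \<in> Poly_Mapping.keys a \<and> wt \<alpha> = M \<and>
        res (Poly_Mapping.lookup a \<alpha> * p powi (- \<nu> (Poly_Mapping.lookup a \<alpha>))) = res (x \<alpha>)" if "\<alpha> \<in> U" for \<alpha>
    proof -
      have rx: "res (fps_nth (c \<alpha>) (subdegree (c \<alpha>))) \<noteq> 0" using that unfolding U_def x_def b0_def by simp
      note G = coef_G[OF Rc rx]
      have "\<alpha> \<in> Poly_Mapping.keys a" using G(1) la by (simp add: in_keys_iff)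
      moreover have "wt \<alpha> = M" using G(2) that unfolding wt_def la U_def Lv b0_def by simp
      moreover have "res (Poly_Mapping.lookup a \<alpha> * p powi (- \<nu> (Poly_Mapping.lookup a \<alpha>))) = res (x \<alpha>)"
        using G(3) unfolding la x_def b0_def .
      ultimately show ?thesis by blast
    qed
    have Mx: "Max (wt ` Poly_Mapping.keys a) = M"
    proof (rule Max_eqI)
      show "finite (wt ` Poly_Mapping.keys a)" by simp
      show "y \<le> M" if "y \<in> wt ` Poly_Mapping.keys a" for y
        using that wt_le LM keysa by force
      show "M \<in> wt ` Poly_Mapping.keys a" using U_wt[OF a0] by force
    qed
    have set: "{\<alpha> \<in> Poly_Mapping.keys a. wt \<alpha> = M} = U" using wt_U U_wt by blast
    have "in_nu \<nu> res p v a = (\<Sum>\<alpha>\<in>U. Poly_Mapping.single \<alpha>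
        (res (Poly_Mapping.lookup a \<alpha> * p powi (- \<nu> (Poly_Mapping.lookup a \<alpha>)))))"
      unfolding in_nu_def Let_def wt_def[symmetric] Mx set ..
    also have "\<dots> = (\<Sum>\<alpha>\<in>U. Poly_Mapping.single \<alpha> (res (x \<alpha>)))"
      using U_wt by (intro sum.cong) auto
    also have "\<dots> = Phi (in_u (-1, v) f)"
    proof (rule poly_mapping_eqI)
      fix \<gamma>
      have finU: "finite U" unfolding U_def using finK by simp
      show "Poly_Mapping.lookup (\<Sum>\<alpha>\<in>U. Poly_Mapping.single \<alpha> (res (x \<alpha>))) \<gamma> =
            Poly_Mapping.lookup (Phi (in_u (-1, v) f)) \<gamma>"
        unfolding lookup_sum_single[OF finU] PI by (auto simp: U_def)
    qed
    finally show ?thesis unfolding a_def by simp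
  qed
qed

end



lemma lookup_single0_mult:
  fixes g :: "'a::comm_monoid_add \<Rightarrow>\<^sub>0 'b::comm_semiring_1"
  shows "Poly_Mapping.lookup (Poly_Mapping.single 0 c * g) \<alpha> = c * Poly_Mapping.lookup g \<alpha>"
proof (cases "c = 0")
  case True then show ?thesis by simp
next
  case False
  have "Poly_Mapping.single 0 c * g = (\<Sum>\<beta>\<in>Poly_Mapping.keys g. Poly_Mapping.single \<beta> (c * Poly_Mapping.lookup g \<beta>))"
    unfolding mult_expand using False by simp
  then show ?thesis by (simp add: lookup_sum_single in_keys_iff)
qed

context vsetting begin

lemma in_nu_scale: "in_nu \<nu> res p v (Poly_Mapping.single 0 (p ^ k) * g) = in_nu \<nu> res p v g"
proof -
  define q where "q = Poly_Mapping.single 0 (p ^ k) * g"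
  have lq: "Poly_Mapping.lookup q \<alpha> = p ^ k * Poly_Mapping.lookup g \<alpha>" for \<alpha>
    unfolding q_def by (rule lookup_single0_mult)
  have kq: "Poly_Mapping.keys q = Poly_Mapping.keys g" by (auto simp: in_keys_iff lq p0)
  define wt where "wt = (\<lambda>\<alpha>. wdot v \<alpha> - real_of_int (\<nu> (Poly_Mapping.lookup g \<alpha>)))"
  define wq where "wq = (\<lambda>\<alpha>. wdot v \<alpha> - real_of_int (\<nu> (Poly_Mapping.lookup q \<alpha>)))"
  have nq: "\<nu> (Poly_Mapping.lookup q \<alpha>) = int k + \<nu> (Poly_Mapping.lookup g \<alpha>)" if "\<alpha> \<in> Poly_Mapping.keys g" for \<alpha>
    using that p0 by (simp add: lq numult nupow in_keys_iff)
  have wq: "wq \<alpha> = wt \<alpha> - real k" if "\<alpha> \<in> Poly_Mapping.keys g" for \<alpha>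
    using nq[OF that] unfolding wq_def wt_def by simp
  have coef: "Poly_Mapping.lookup q \<alpha> * p powi (- \<nu> (Poly_Mapping.lookup q \<alpha>)) =
       Poly_Mapping.lookup g \<alpha> * p powi (- \<nu> (Poly_Mapping.lookup g \<alpha>))" if "\<alpha> \<in> Poly_Mapping.keys g" for \<alpha>
  proof -
    have "p powi (- \<nu> (Poly_Mapping.lookup q \<alpha>)) = p powi (- int k) * p powi (- \<nu> (Poly_Mapping.lookup g \<alpha>))"
      unfolding nq[OF that] using p0 by (simp add: power_int_add[symmetric])
    then show ?thesis unfolding lq
      using powi_cancel[of k] by (simp add: algebra_simps)
  qed
  show ?thesis
  proof (cases "Poly_Mapping.keys g = {}")
    case True
    then show ?thesis unfolding in_nu_def Let_def q_def[symmetric] kq by simp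
  next
    case ne: False
    have mono: "mono (\<lambda>x::real. x - real k)" by (auto intro: monoI)
    have MM: "Max (wq ` Poly_Mapping.keys g) = Max (wt ` Poly_Mapping.keys g) - real k"
    proof -
      have "wq ` Poly_Mapping.keys g = (\<lambda>x. x - real k) ` (wt ` Poly_Mapping.keys g)"
        using wq by (auto simp: image_image intro!: image_cong)
      then show ?thesis using mono_Max_commute[OF mono, of "wt ` Poly_Mapping.keys g"] ne by simp
    qed
    have set: "{\<alpha> \<in> Poly_Mapping.keys g. wq \<alpha> = Max (wq ` Poly_Mapping.keys g)} =
               {\<alpha> \<in> Poly_Mapping.keys g. wt \<alpha> = Max (wt ` Poly_Mapping.keys g)}"
      using wq MM by auto
    show ?thesis
      unfolding in_nu_def Let_def q_def[symmetric] wq_def[symmetric] wt_def[symmetric] kq set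
      using coef by (intro sum.cong) auto
  qed
qed

definition DD :: "'k \<Rightarrow> 'k fps" where "DD b = (if b = 0 then 0 else Abs_fps (digit b))"

lemma DD: assumes "b \<in> V 0" "b \<noteq> 0"
  shows "\<forall>\<beta>. fps_nth (DD b) \<beta> \<in> R" "DD b \<noteq> 0" "subdegree (DD b) = nat (\<nu> b)"
    "res (fps_nth (DD b) (subdegree (DD b))) = res (b * p powi (- \<nu> b))"
    "subst_p \<nu> p (DD b) = b"
proof -
  show R: "\<forall>\<beta>. fps_nth (DD b) \<beta> \<in> R" using assms digit_R by (simp add: DD_def)
  have n0: "fps_nth (DD b) (nat (\<nu> b)) \<noteq> 0" using digit_lead(1)[OF assms(2,1)] assms by (simp add: DD_def)
  then show "DD b \<noteq> 0" by auto
  show sd: "subdegree (DD b) = nat (\<nu> b)"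
    by (rule subdegreeI[OF n0]) (use digit_low[OF assms(2,1)] assms in \<open>auto simp: DD_def\<close>)
  show "res (fps_nth (DD b) (subdegree (DD b))) = res (b * p powi (- \<nu> b))"
    unfolding sd using digit_lead(2)[OF assms(2,1)] assms by (simp add: DD_def)
  show "subst_p \<nu> p (DD b) = b"
    by (rule subst_p_eq) (use digit_lim[OF assms(1)] assms in \<open>simp add: DD_def\<close>)
qed

lemma claimB0: assumes g: "\<forall>\<alpha>. Poly_Mapping.lookup g \<alpha> \<in> V 0"
  shows "\<exists>f\<in>RtX R. pi_map \<nu> p f = g \<and> Phi (in_u (-1, v) f) = in_nu \<nu> res p v g"
proof -
  define f where "f = Poly_Mapping.map DD g"
  have lf: "Poly_Mapping.lookup f \<alpha> = DD (Poly_Mapping.lookup g \<alpha>)" for \<alpha>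
    unfolding f_def by (rule lookup_map0) (simp add: DD_def)
  have fR: "f \<in> RtX R" unfolding RtX_def
  proof (intro CollectI allI)
    fix \<alpha> \<beta>
    show "fps_nth (Poly_Mapping.lookup f \<alpha>) \<beta> \<in> R"
      using DD(1)[OF g[rule_format]] R_0 unfolding lf by (cases "Poly_Mapping.lookup g \<alpha> = 0") (auto simp: DD_def)
  qed
  have pf: "pi_map \<nu> p f = g"
  proof (rule poly_mapping_eqI)
    fix \<alpha>
    show "Poly_Mapping.lookup (pi_map \<nu> p f) \<alpha> = Poly_Mapping.lookup g \<alpha>"
      unfolding lookup_pi lf using DD(5)[OF g[rule_format]] by (cases "Poly_Mapping.lookup g \<alpha> = 0") (auto simp: DD_def)
  qed
  have kf: "Poly_Mapping.keys f = Poly_Mapping.keys g"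
    using DD(2)[OF g[rule_format]] by (auto simp: in_keys_iff lf DD_def)
  define wt where "wt = (\<lambda>\<alpha>. wdot v \<alpha> - real_of_int (\<nu> (Poly_Mapping.lookup g \<alpha>)))"
  have Lw: "Lfun (-1) v f \<alpha> = wt \<alpha>" if "\<alpha> \<in> Poly_Mapping.keys g" for \<alpha>
  proof -
    have gne: "Poly_Mapping.lookup g \<alpha> \<noteq> 0" using that by (simp add: in_keys_iff)
    then have "\<nu> (Poly_Mapping.lookup g \<alpha>) \<ge> 0" using g by (auto simp: V_def)
    then show ?thesis using DD(3)[OF g[rule_format] gne] unfolding Lfun_def wt_def lf by simp
  qed
  have MM: "Max (Lfun (-1) v f ` Poly_Mapping.keys f) = Max (wt ` Poly_Mapping.keys g)"
    unfolding kf using Lw by (metis (no_types, lifting) image_cong)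
  have "Phi (in_u (-1, v) f) = in_nu \<nu> res p v g"
  proof (rule poly_mapping_eqI)
    fix \<alpha>
    have fin: "finite {\<alpha> \<in> Poly_Mapping.keys g. wt \<alpha> = Max (wt ` Poly_Mapping.keys g)}" by simp
    show "Poly_Mapping.lookup (Phi (in_u (-1, v) f)) \<alpha> = Poly_Mapping.lookup (in_nu \<nu> res p v g) \<alpha>"
      unfolding Phi_inu[OF fR] in_nu_def Let_def wt_def[symmetric] lookup_sum_single[OF fin] MM kf
      using Lw DD(4)[OF g[rule_format]] by (auto simp: in_keys_iff lf)
  qed
  then show ?thesis using fR pf by blast
qed

end



context vsetting begin

lemma claimB: assumes I: "I = gen_ideal UNIV G'" and g: "g \<in> I"
  shows "\<exists>f\<in>pi_preimage \<nu> p R I. Phi (in_u (-1, v) f) = in_nu \<nu> res p v g"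
proof -
  define k where "k = nat (Max (insert 0 ((\<lambda>\<alpha>. - \<nu> (Poly_Mapping.lookup g \<alpha>)) ` Poly_Mapping.keys g)))"
  have kb: "int k + \<nu> (Poly_Mapping.lookup g \<alpha>) \<ge> 0" if "\<alpha> \<in> Poly_Mapping.keys g" for \<alpha>
  proof -
    have "- \<nu> (Poly_Mapping.lookup g \<alpha>) \<le> Max (insert 0 ((\<lambda>\<alpha>. - \<nu> (Poly_Mapping.lookup g \<alpha>)) ` Poly_Mapping.keys g))"
      using that by (intro Max_ge) auto
    then show ?thesis unfolding k_def by linarith
  qed
  define g' where "g' = Poly_Mapping.single 0 (p ^ k) * g"
  have g'I: "g' \<in> I" unfolding g'_def I by (rule gen_ideal_mult) (use g I in simp)
  have V0: "\<forall>\<alpha>. Poly_Mapping.lookup g' \<alpha> \<in> V 0"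
  proof
    fix \<alpha>
    show "Poly_Mapping.lookup g' \<alpha> \<in> V 0"
    proof (cases "\<alpha> \<in> Poly_Mapping.keys g")
      case True
      then have "Poly_Mapping.lookup g \<alpha> \<noteq> 0" by (simp add: in_keys_iff)
      then show ?thesis using kb[OF True] p0
        by (simp add: g'_def lookup_single0_mult V_def numult nupow)
    next
      case False
      then show ?thesis by (simp add: g'_def lookup_single0_mult in_keys_iff)
    qed
  qed
  obtain f where f: "f \<in> RtX R" "pi_map \<nu> p f = g'" "Phi (in_u (-1, v) f) = in_nu \<nu> res p v g'"
    using claimB0[OF V0] by blast
  have "f \<in> pi_preimage \<nu> p R I" unfolding pi_preimage_def using f g'I by simp
  moreover have "Phi (in_u (-1, v) f) = in_nu \<nu> res p v g" using f(3) in_nu_scale unfolding g'_def by simp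
  ultimately show ?thesis by blast
qed

lemma thmT: assumes I: "I = gen_ideal UNIV G'"
  shows "in_nu_ideal \<nu> res p v I = gen_ideal UNIV (Phi ` in_u_ideal R (-1, v) (pi_preimage \<nu> p R I))"
proof
  let ?J = "pi_preimage \<nu> p R I"
  show "in_nu_ideal \<nu> res p v I \<subseteq> gen_ideal UNIV (Phi ` in_u_ideal R (-1, v) ?J)"
    unfolding in_nu_ideal_def
  proof (rule gen_ideal_mono, rule subsetI)
    fix y assume "y \<in> in_nu \<nu> res p v ` I"
    then obtain g where g: "g \<in> I" "y = in_nu \<nu> res p v g" by blast
    obtain f where f: "f \<in> ?J" "Phi (in_u (-1, v) f) = y" using claimB[OF I g(1), of v] g(2) by blast
    have "in_u (-1, v) f \<in> in_u_ideal R (-1, v) ?J"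
      unfolding in_u_ideal_def by (rule gen_ideal_gen[OF Rtx_1]) (use f in blast)
    then show "y \<in> Phi ` in_u_ideal R (-1, v) ?J" using f(2) by blast
  qed
  show "gen_ideal UNIV (Phi ` in_u_ideal R (-1, v) ?J) \<subseteq> in_nu_ideal \<nu> res p v I"
    unfolding in_nu_ideal_def
  proof (rule gen_ideal_sub, rule subsetI)
    fix y assume "y \<in> Phi ` in_u_ideal R (-1, v) ?J"
    then obtain q where q: "q \<in> in_u_ideal R (-1, v) ?J" "y = Phi q" by blast
    then obtain m h gg where hg: "q = (\<Sum>i<(m::nat). h i * gg i)"
        "\<forall>i<m. h i \<in> RtxPoly R \<and> gg i \<in> in_u (-1, v) ` ?J"
      unfolding in_u_ideal_def using gen_ideal_elim by blast
    have ggf: "\<exists>f. f \<in> RtX R \<and> pi_map \<nu> p f \<in> I \<and> gg i = in_u (-1, v) f" if im: "i < m" for i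
    proof -
      obtain f where f: "f \<in> ?J" "gg i = in_u (-1, v) f" using hg(2) im by blast
      then show ?thesis unfolding pi_preimage_def by blast
    qed
    have ggR: "gg i \<in> RtxPoly R" if im: "i < m" for i
    proof -
      obtain f where f: "f \<in> RtX R" "gg i = in_u (-1, v) f" using ggf[OF im] by blast
      show ?thesis unfolding f(2) by (rule inu_R[OF f(1)])
    qed
    have hR: "h i \<in> RtxPoly R" if "i < m" for i using hg(2) that by blast
    have ggI: "Phi (gg i) \<in> gen_ideal UNIV (in_nu \<nu> res p v ` I)" if im: "i < m" for i
    proof -
      obtain f where f: "f \<in> RtX R" "pi_map \<nu> p f \<in> I" "gg i = in_u (-1, v) f" using ggf[OF im] by blast
      have mem: "in_nu \<nu> res p v (pi_map \<nu> p f) \<in> gen_ideal UNIV (in_nu \<nu> res p v ` I)"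
        by (rule gen_ideal_gen) (use f(2) in auto)
      from claimA[OF f(1), of v] show ?thesis
      proof
        assume "Phi (in_u (-1, v) f) = 0" then show ?thesis unfolding f(3) using gen_ideal_0 by simp
      next
        assume "Phi (in_u (-1, v) f) = in_nu \<nu> res p v (pi_map \<nu> p f)" then show ?thesis unfolding f(3) using mem by simp
      qed
    qed
    have "y = (\<Sum>i<m. Phi (h i * gg i))"
      unfolding q(2) hg(1) by (rule Phi_sum) (simp add: Rtx_mult hR ggR)
    also have "\<dots> = (\<Sum>i<m. Phi (h i) * Phi (gg i))"
      by (rule sum.cong[OF refl]) (simp add: Phi_mult hR ggR)
    also have "\<dots> \<in> gen_ideal UNIV (in_nu \<nu> res p v ` I)"
      by (intro gen_ideal_sum gen_ideal_mult ggI) simp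
    finally show "y \<in> gen_ideal UNIV (in_nu \<nu> res p v ` I)" .
  qed
qed

end

theorem corollary3p5:
  fixes \<nu> :: "'k::field \<Rightarrow> int" and p :: 'k and res :: "'k \<Rightarrow> 'f::field"
    and R :: "'k set"
    and I :: "(('n::finite \<Rightarrow>\<^sub>0 nat) \<Rightarrow>\<^sub>0 'k) set" and w :: "real^'n"
  assumes "discrete_valuation \<nu> p"
    and "val_complete \<nu>"
    and "residue_map \<nu> res"
    and "noetherian_subring R"
    and "R \<subseteq> val_ring \<nu>"
    and "dense_in_val_ring \<nu> R"
    and "p \<in> R"
    and "homogeneous_ideal I"
  shows "snd ` (groebner_cone R (-1, w) (pi_preimage \<nu> p R I) \<inter> {v. fst v = -1})
           \<subseteq> groebner_polytope \<nu> res p I w"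
proof
  interpret vsetting \<nu> p res R
    using assms by (unfold_locales) (auto simp: noetherian_subring_def)
  obtain G' where I: "I = gen_ideal UNIV G'" using assms(8) unfolding homogeneous_ideal_def by blast
  let ?J = "pi_preimage \<nu> p R I"
  define S where "S = {z. fst z < 0 \<and> in_u_ideal R z ?J = in_u_ideal R (-1, w) ?J}"
  define P where "P = {v. in_nu_ideal \<nu> res p v I = in_nu_ideal \<nu> res p w I}"
  have SP: "(1 / (- fst z)) *\<^sub>R snd z \<in> P" if "z \<in> S" for z
  proof -
    obtain s v' where z: "z = (s, v')" by (cases z)
    have s: "s < 0" and eq: "in_u_ideal R (s, v') ?J = in_u_ideal R (-1, w) ?J"
      using that z unfolding S_def by auto
    define c where "c = - s"
    define v'' where "v'' = (1 / c) *\<^sub>R v'"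
    have c: "c > 0" using s c_def by simp
    have "in_u (s, v') = in_u (c * (-1), c *\<^sub>R v'')"
      using c unfolding c_def v''_def by simp
    also have "\<dots> = in_u (-1, v'')"
    proof
      fix f show "in_u (c * (-1), c *\<^sub>R v'') f = in_u (-1, v'') f" using inu_scale[of "-1" c v'' f] c by simp
    qed
    finally have h: "in_u (s, v') = in_u (-1, v'')" .
    have "in_u_ideal R (-1, v'') ?J = in_u_ideal R (-1, w) ?J"
    proof -
      have "in_u_ideal R (s, v') ?J = in_u_ideal R (-1, v'') ?J" unfolding in_u_ideal_def h ..
      then show ?thesis using eq by simp
    qed
    then have "in_nu_ideal \<nu> res p v'' I = in_nu_ideal \<nu> res p w I"
      unfolding thmT[OF I] by simp
    then show ?thesis unfolding P_def z v''_def c_def by simp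
  qed
  fix x assume "x \<in> snd ` (groebner_cone R (-1, w) ?J \<inter> {v. fst v = -1})"
  then obtain z where z: "z \<in> closure S" "fst z = -1" "x = snd z"
    unfolding groebner_cone_def S_def by auto
  obtain \<sigma> where \<sigma>: "\<forall>n. \<sigma> n \<in> S" "\<sigma> \<longlonglongrightarrow> z" using z(1) unfolding closure_sequential by blast
  define \<tau> where "\<tau> = (\<lambda>n. (1 / (- fst (\<sigma> n))) *\<^sub>R snd (\<sigma> n))"
  have "\<tau> \<longlonglongrightarrow> (1 / (- fst z)) *\<^sub>R snd z"
    unfolding \<tau>_def using z(2)
    by (intro tendsto_intros \<sigma>(2)) auto
  then have "\<tau> \<longlonglongrightarrow> x" using z by simp
  moreover have "\<forall>n. \<tau> n \<in> P" using SP \<sigma>(1) unfolding \<tau>_def by blast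
  ultimately have "x \<in> closure P" unfolding closure_sequential by blast
  then show "x \<in> groebner_polytope \<nu> res p I w" unfolding groebner_polytope_def P_def .
qed


end
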